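(* Let $N=3$ and let $g,h,u_m,\alpha_1,\delta_h,\delta_q$ be real numbers. Let $\boldsymbol{A}_H\in\mathbb{R}^{6\times6}$ be the matrix $$\boldsymbol{A}_H=\begin{pmatrix}0&1&0&0&0&0\\ gh-u_m^2-\tfrac13\alpha_1^2&2u_m&\tfrac23\alpha_1&0&0&gh\\ -2u_m\alpha_1&2\alpha_1&u_m&\tfrac35\alpha_1&0&0\\ -\tfrac23\alpha_1^2&0&\tfrac13\alpha_1&u_m&\tfrac47\alpha_1&0\\ 0&0&0&\tfrac25\alpha_1&u_m&0\\ \delta_h&\delta_q&\delta_q&\delta_q&\delta_q&0\end{pmatrix}.$$ Then the eigenvalues of $\boldsymbol{A}_H$ are $\lambda_1,\lambda_2,\lambda_3$, the three roots of $$P_S(\lambda)=-\lambda\big((\lambda-u_m)^2-gh-\alpha_1^2\big)+gh(\delta_h+\lambda\delta_q+2\alpha_1\delta_q),$$ together with $\lambda_4=u_m$ and $\lambda_{5,6}=u_m\pm\sqrt{3/7}\,\alpha_1$.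
   Context: $\boldsymbol{A}_H$ is the system matrix of the third-order Hyperbolic Shallow Water Exner Moment model, with $h$ water height, $g$ gravity, $u_m$ mean velocity, $\alpha_1$ the first Legendre moment of the velocity profile, and $\delta_h=\partial_hQ_b$, $\delta_q=\partial_{hu_m}Q_b$ partial derivatives of the solid transport discharge; for the statement these are arbitrary real parameters. *)

theory Defs
  imports "Jordan_Normal_Form.Char_Poly"
begin

text \<open>System matrix A_H of the third-order HSWEM model (N = 3), 6x6, real entries,
  viewed over the complex numbers so that all eigenvalues exist.\<close>
definition A_H :: "real \<Rightarrow> real \<Rightarrow> real \<Rightarrow> real \<Rightarrow> real \<Rightarrow> real \<Rightarrow> complex mat" where
  "A_H g h um a1 dh dq = map_mat complex_of_real (mat_of_rows_list 6
     [[0, 1, 0, 0, 0, 0],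
      [g*h - um^2 - a1^2/3, 2*um, 2/3*a1, 0, 0, g*h],
      [-2*um*a1, 2*a1, um, 3/5*a1, 0, 0],
      [-2/3*a1^2, 0, a1/3, um, 4/7*a1, 0],
      [0, 0, 0, 2/5*a1, um, 0],
      [dh, dq, dq, dq, dq, 0]])"

definition P_S :: "real \<Rightarrow> real \<Rightarrow> real \<Rightarrow> real \<Rightarrow> real \<Rightarrow> real \<Rightarrow> complex \<Rightarrow> complex" where
  "P_S g h um a1 dh dq l =
     - l * ((l - of_real um)^2 - of_real (g*h) - of_real (a1^2))
     + of_real (g*h) * (of_real dh + l * of_real dq + 2 * of_real a1 * of_real dq)"

end

theory Submission imports Defs begin

lemma det_mat_Suc:
  fixes f :: "nat \<times> nat \<Rightarrow> 'a::comm_ring_1"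
  shows "det (mat (Suc n) (Suc n) f) = (\<Sum>j<Suc n. f (0,j) * ((-1)^j * det (mat n n (\<lambda>(i,k). f (Suc i, if k < j then k else Suc k)))))"
proof -
  have "det (mat (Suc n) (Suc n) f) = (\<Sum>j<Suc n. mat (Suc n) (Suc n) f $$ (0,j) * cofactor (mat (Suc n) (Suc n) f) 0 j)"
    by (rule laplace_expansion_row) auto
  also have "\<dots> = (\<Sum>j<Suc n. f (0,j) * ((-1)^j * det (mat n n (\<lambda>(i,k). f (Suc i, if k < j then k else Suc k)))))"
  proof (rule sum.cong[OF refl])
    fix j assume j: "j \<in> {..<Suc n}"
    have "mat_delete (mat (Suc n) (Suc n) f) 0 j = mat n n (\<lambda>(i,k). f (Suc i, if k < j then k else Suc k))"
      unfolding mat_delete_def by (rule eq_matI) auto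
    then show "mat (Suc n) (Suc n) f $$ (0,j) * cofactor (mat (Suc n) (Suc n) f) 0 j = f (0,j) * ((-1)^j * det (mat n n (\<lambda>(i,k). f (Suc i, if k < j then k else Suc k))))"
      using j unfolding cofactor_def by simp
  qed
  finally show ?thesis .
qed

lemma det_mat_0: "det (mat 0 0 f) = 1"
  by (simp add: det_def')


definition del :: "nat \<Rightarrow> 'a list \<Rightarrow> 'a list" where "del j xs = take j xs @ drop (Suc j) xs"

lemma del_simps[simp]: "del 0 (x#xs) = xs" "del (Suc j) (x#xs) = x # del j xs" "del j [] = []"
  by (simp_all add: del_def)

fun detl :: "'a::comm_ring_1 list list \<Rightarrow> 'a" where
  "detl [] = 1"
| "detl (r#L) = (\<Sum>j<length r. r!j * ((-1)^j * detl (map (del j) L)))"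

lemma nth_del: "k < length xs - 1 \<Longrightarrow> del j xs ! k = xs ! (if k < j then k else Suc k)"
  unfolding del_def by (auto simp: nth_append min_def)

lemma length_del[simp]: "length (del j xs) = (if j < length xs then length xs - 1 else length xs)"
  unfolding del_def by auto

lemma det_detl: "length L = n \<Longrightarrow> (\<forall>r\<in>set L. length r = n) \<Longrightarrow>
   det (mat n n (\<lambda>(i,j). L!i!j)) = detl L"
proof (induction n arbitrary: L)
  case 0
  then show ?case by (simp add: det_def')
next
  case (Suc m)
  then obtain r L' where L: "L = r # L'" by (cases L) auto
  have IH: "j < Suc m \<Longrightarrow> det (mat m m (\<lambda>(i,k). map (del j) L' ! i ! k)) = detl (map (del j) L')" for j
    using Suc.prems L by (intro Suc.IH) auto
  have eq: "j < Suc m \<Longrightarrow> mat m m (\<lambda>(i,k). L ! Suc i ! (if k < j then k else Suc k)) = mat m m (\<lambda>(i,k). map (del j) L' ! i ! k)" for j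
    using Suc.prems L by (intro eq_matI) (auto simp: nth_del)
  show ?case unfolding det_mat_Suc using Suc.prems IH eq L
    by (auto intro!: sum.cong)
qed

lemma detl_M: fixes x G U a Dh Dq :: complex shows
  "detl [[x, -1, 0,0,0,0],
  [-(G-U^2-a^2/3), x-2*U, -2/3*a, 0,0, -G],
  [2*U*a, -2*a, x-U, -3/5*a, 0,0],
  [2/3*a^2, 0, -a/3, x-U, -4/7*a, 0],
  [0,0,0,-2/5*a, x-U, 0],
  [-Dh, -Dq,-Dq,-Dq,-Dq, x]] = (x^3 - 2*U*x^2 + (U^2 - G - a^2 - G*Dq)*x - G*(Dh+2*a*Dq)) * (x-U) * ((x-U)^2 - 3/7*a^2)"
  apply (simp add: lessThan_Suc numeral_nat)
  apply (simp add: field_simps)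
  apply algebra
  done

theorem corollary1:
  fixes g h um a1 dh dq :: real
  shows "\<exists>l1 l2 l3 :: complex.
     (\<forall>l. P_S g h um a1 dh dq l = - ((l - l1) * (l - l2) * (l - l3))) \<and>
     char_poly (A_H g h um a1 dh dq) =
       [:-l1, 1:] * [:-l2, 1:] * [:-l3, 1:] * [:- complex_of_real um, 1:]
       * [:- complex_of_real (um + sqrt (3/7) * a1), 1:]
       * [:- complex_of_real (um - sqrt (3/7) * a1), 1:]"
proof -
  define G :: complex where "G = of_real (g*h)"
  define U :: complex where "U = of_real um"
  define a :: complex where "a = of_real a1"
  define Dh :: complex where "Dh = of_real dh"
  define Dq :: complex where "Dq = of_real dq"
  define q :: "complex poly" where "q = [:-(G*(Dh+2*a*Dq)), U^2 - G - a^2 - G*Dq, -2*U, 1:]"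
  have dq: "degree q = 3" "coeff q 3 = 1" unfolding q_def by (simp_all add: numeral_3_eq_3)
  obtain as where as: "Polynomial.smult (coeff q (degree q)) (\<Prod>a\<leftarrow>as. [:- a, 1:]) = q" "length as = degree q"
    using fundamental_theorem_algebra_factorized by blast
  then obtain l1 l2 l3 where as3: "as = [l1,l2,l3]" using dq
    by (cases as; cases "tl as"; cases "tl (tl as)") (auto simp: numeral_3_eq_3)
  have qf: "q = [:-l1, 1:] * [:-l2, 1:] * [:-l3, 1:]"
    using as(1) unfolding as3 dq by (simp del: pCons_eq_iff mult_pCons_left mult_pCons_right add: mult.assoc)
  have PS: "P_S g h um a1 dh dq l = - poly q l" for l
    unfolding P_S_def q_def G_def U_def a_def Dh_def Dq_def
    by (simp add: algebra_simps power2_eq_square)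
  define R :: "real list list" where "R =
     [[0, 1, 0, 0, 0, 0],
      [g*h - um^2 - a1^2/3, 2*um, 2/3*a1, 0, 0, g*h],
      [-2*um*a1, 2*a1, um, 3/5*a1, 0, 0],
      [-2/3*a1^2, 0, a1/3, um, 4/7*a1, 0],
      [0, 0, 0, 2/5*a1, um, 0],
      [dh, dq, dq, dq, dq, 0]]"
  have Aeq: "A_H g h um a1 dh dq = mat 6 6 (\<lambda>(i,j). complex_of_real (R ! i ! j))"
    unfolding A_H_def R_def[symmetric] by (rule eq_matI) (auto simp: R_def mat_of_rows_list_def)
  have Ac: "A_H g h um a1 dh dq \<in> carrier_mat 6 6" unfolding Aeq by simp
  define Lx where "Lx x = [[x, -1, 0,0,0,0],
  [-(G-U^2-a^2/3), x-2*U, -2/3*a, 0,0, -G],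
  [2*U*a, -2*a, x-U, -3/5*a, 0,0],
  [2/3*a^2, 0, -a/3, x-U, -4/7*a, 0],
  [0,0,0,-2/5*a, x-U, 0],
  [-Dh, -Dq,-Dq,-Dq,-Dq, x]]" for x
  have detx: "poly (char_poly (A_H g h um a1 dh dq)) x =
      poly q x * (x - U) * ((x - U)^2 - 3/7 * a^2)" for x
  proof -
    have "poly (char_poly (A_H g h um a1 dh dq)) x = det (- char_matrix (A_H g h um a1 dh dq) x)"
      by (rule char_poly_matrix[OF Ac])
    also have "- char_matrix (A_H g h um a1 dh dq) x = mat 6 6 (\<lambda>(i,j). Lx x ! i ! j)"
      unfolding char_matrix_def Aeq
    proof (rule eq_matI)
      fix i j assume "i < dim_row (mat 6 6 (\<lambda>(i,j). Lx x ! i ! j))" "j < dim_col (mat 6 6 (\<lambda>(i,j). Lx x ! i ! j))"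
      then have "i \<in> {0,1,2,3,4,5}" "j \<in> {0,1,2,3,4,5}" by auto
      then show "(- (mat 6 6 (\<lambda>(i, j). complex_of_real (R ! i ! j)) + - x \<cdot>\<^sub>m 1\<^sub>m (dim_row (mat 6 6 (\<lambda>(i, j). complex_of_real (R ! i ! j)))))) $$ (i, j) =
         mat 6 6 (\<lambda>(i,j). Lx x ! i ! j) $$ (i, j)"
        by (auto simp: R_def Lx_def G_def U_def a_def Dh_def Dq_def)
    qed auto
    also have "det \<dots> = detl (Lx x)"
      by (rule det_detl) (auto simp: Lx_def)
    also have "\<dots> = poly q x * (x - U) * ((x - U)^2 - 3/7 * a^2)"
      unfolding Lx_def detl_M by (simp add: q_def algebra_simps power2_eq_square power3_eq_cube)
    finally show ?thesis .
  qed
  have s2: "complex_of_real (sqrt (3/7)) ^ 2 = 3/7"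
    by (metis of_real_power real_sqrt_pow2 of_real_divide of_real_numeral less_eq_real_def divide_pos_pos zero_less_numeral)
  have "char_poly (A_H g h um a1 dh dq) =
       [:-l1, 1:] * [:-l2, 1:] * [:-l3, 1:] * [:- complex_of_real um, 1:]
       * [:- complex_of_real (um + sqrt (3/7) * a1), 1:]
       * [:- complex_of_real (um - sqrt (3/7) * a1), 1:]"
  proof (rule poly_eq_poly_eq_iff[THEN iffD1], rule ext)
    fix x
    have "(x - complex_of_real (um + sqrt (3/7) * a1)) * (x - complex_of_real (um - sqrt (3/7) * a1))
        = (x - U)^2 - complex_of_real (sqrt (3/7)) ^ 2 * a^2"
      unfolding U_def a_def by (simp add: algebra_simps power2_eq_square)
    then have e2: "(x - complex_of_real (um + sqrt (3/7) * a1)) * (x - complex_of_real (um - sqrt (3/7) * a1))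
        = (x - U)^2 - 3/7 * a^2" using s2 by simp
    have e1: "poly ([:-l1, 1:] * [:-l2, 1:] * [:-l3, 1:] * [:- complex_of_real um, 1:]
       * [:- complex_of_real (um + sqrt (3/7) * a1), 1:]
       * [:- complex_of_real (um - sqrt (3/7) * a1), 1:]) x
       = poly q x * (x - U) * ((x - complex_of_real (um + sqrt (3/7) * a1)) * (x - complex_of_real (um - sqrt (3/7) * a1)))"
      unfolding qf U_def by (simp only: poly_mult poly_pCons poly_0) (simp add: algebra_simps)
    then show "poly (char_poly (A_H g h um a1 dh dq)) x = poly ([:-l1, 1:] * [:-l2, 1:] * [:-l3, 1:] * [:- complex_of_real um, 1:]
       * [:- complex_of_real (um + sqrt (3/7) * a1), 1:]
       * [:- complex_of_real (um - sqrt (3/7) * a1), 1:]) x"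
      unfolding detx e1 e2 ..
  qed
  moreover have "\<forall>l. P_S g h um a1 dh dq l = - ((l - l1) * (l - l2) * (l - l3))"
    using PS qf by (simp add: algebra_simps)
  ultimately show ?thesis by blast
qed

end
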